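(* Let $A,B,C$ be finite-dimensional complex vector spaces and let $T\in A\otimes B\otimes C$ be nonzero. Then there exists a hyperplane $H_A\subset A^*$ such that $\underline{\mathbf R}(T|_{H_A\times B^*\times C^*})\le\underline{\mathbf R}(T)-1$. Equivalently, there exists a nonzero $a\in A$ such that the image $T'$ of $T$ under the projection $A\otimes B\otimes C\to (A/\langle a\rangle)\otimes B\otimes C$ satisfies $\underline{\mathbf R}(T')\le\underline{\mathbf R}(T)-1$.
   Context: The border rank $\underline{\mathbf R}(T)$ of a tensor $T$ is the smallest $r$ such that $T$ is a limit of tensors that are sums of $r$ rank one tensors $a\otimes b\otimes c$ (i.e. $[T]\in\sigma_r(Seg(\mathbb PA\times\mathbb PB\times\mathbb PC))$). *)

theory Defs
  imports Complex_Main
begin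

text \<open>Tensors in A \<otimes> B \<otimes> C with dim A = na, dim B = nb, dim C = nc, represented in
  coordinates as functions nat \<Rightarrow> nat \<Rightarrow> nat \<Rightarrow> complex; only the entries with
  i < na, j < nb, k < nc are meaningful.\<close>

type_synonym tensor = "nat \<Rightarrow> nat \<Rightarrow> nat \<Rightarrow> complex"

definition tensor_eq :: "nat \<Rightarrow> nat \<Rightarrow> nat \<Rightarrow> tensor \<Rightarrow> tensor \<Rightarrow> bool" where
  "tensor_eq na nb nc S T \<longleftrightarrow> (\<forall>i<na. \<forall>j<nb. \<forall>k<nc. S i j k = T i j k)"

definition rank_le :: "nat \<Rightarrow> nat \<Rightarrow> nat \<Rightarrow> nat \<Rightarrow> tensor \<Rightarrow> bool" where
  "rank_le na nb nc r T \<longleftrightarrow>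
     (\<exists>(u::nat \<Rightarrow> nat \<Rightarrow> complex) (v::nat \<Rightarrow> nat \<Rightarrow> complex) (w::nat \<Rightarrow> nat \<Rightarrow> complex).
        tensor_eq na nb nc T (\<lambda>i j k. \<Sum>l<r. u l i * v l j * w l k))"

text \<open>T is a limit of tensors that are sums of r rank one tensors (Euclidean topology on
  the finite-dimensional space A \<otimes> B \<otimes> C, i.e. coordinatewise convergence).\<close>
definition border_rank_le :: "nat \<Rightarrow> nat \<Rightarrow> nat \<Rightarrow> nat \<Rightarrow> tensor \<Rightarrow> bool" where
  "border_rank_le na nb nc r T \<longleftrightarrow>
     (\<exists>S :: nat \<Rightarrow> tensor. (\<forall>m. rank_le na nb nc r (S m)) \<and>
        (\<forall>i<na. \<forall>j<nb. \<forall>k<nc. (\<lambda>m. S m i j k) \<longlonglongrightarrow> T i j k))"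

definition border_rank :: "nat \<Rightarrow> nat \<Rightarrow> nat \<Rightarrow> tensor \<Rightarrow> nat" where
  "border_rank na nb nc T = (LEAST r. border_rank_le na nb nc r T)"

definition lin_indep_family :: "nat \<Rightarrow> nat \<Rightarrow> (nat \<Rightarrow> nat \<Rightarrow> complex) \<Rightarrow> bool" where
  "lin_indep_family na n h \<longleftrightarrow>
     (\<forall>c::nat \<Rightarrow> complex. (\<forall>i<na. (\<Sum>p<n. c p * h p i) = 0) \<longrightarrow> (\<forall>p<n. c p = 0))"

text \<open>Restriction of T (viewed as a trilinear form on A* \<times> B* \<times> C*) to H \<times> B* \<times> C*,
  where H \<subseteq> A* has basis h_0, ..., h_{n-1}; the result lives in H* \<otimes> B \<otimes> C,
  written in the dual basis.\<close>
definition restrict_A :: "nat \<Rightarrow> (nat \<Rightarrow> nat \<Rightarrow> complex) \<Rightarrow> tensor \<Rightarrow> tensor" where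
  "restrict_A na h T = (\<lambda>p j k. \<Sum>i<na. h p i * T i j k)"

end

theory Submission
  imports Defs "HOL-Analysis.Analysis"
begin

lemma sum_mult_split:
  fixes g :: "nat \<Rightarrow> 'a::comm_monoid_add"
  shows "(\<Sum>l<a*b. g l) = (\<Sum>i<a. \<Sum>j<b. g (i*b+j))"
proof (induction a)
  case 0 then show ?case by simp
next
  case (Suc a)
  have "{..<Suc a * b} = {..<a*b} \<union> {a*b..<a*b+b}" by auto
  then have "(\<Sum>l<Suc a*b. g l) = (\<Sum>l<a*b. g l) + (\<Sum>l\<in>{a*b..<a*b+b}. g l)"
    by (simp add: sum.union_disjoint ivl_disj_int)
  also have "(\<Sum>l\<in>{a*b..<a*b+b}. g l) = (\<Sum>j<b. g (a*b+j))"
  proof -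
    have "(\<Sum>l\<in>{0+a*b..<b+a*b}. g l) = (\<Sum>j\<in>{0..<b}. g (j+a*b))"
      by (rule sum.shift_bounds_nat_ivl)
    then show ?thesis by (simp add: atLeast0LessThan add.commute)
  qed
  finally show ?case using Suc by simp
qed

lemma rank_le_exists: "rank_le na nb nc (na*nb) T"
  unfolding rank_le_def tensor_eq_def
proof (intro exI allI impI)
  fix i j k assume i: "i < na" and j: "j < nb" and k: "k < nc"
  let ?u = "\<lambda>l i'. if i' = l div nb then 1 else (0::complex)"
  let ?v = "\<lambda>l j'. if j' = l mod nb then 1 else (0::complex)"
  let ?w = "\<lambda>l k. T (l div nb) (l mod nb) k"
  have "(\<Sum>l<na*nb. ?u l i * ?v l j * ?w l k)
      = (\<Sum>i'<na. \<Sum>j'<nb. ?u (i'*nb+j') i * ?v (i'*nb+j') j * ?w (i'*nb+j') k)"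
    by (rule sum_mult_split)
  also have "\<dots> = (\<Sum>i'<na. \<Sum>j'<nb. (if i' = i \<and> j' = j then T i j k else 0))"
    by (intro sum.cong refl) auto
  also have "\<dots> = (\<Sum>i'<na. if i' = i then (\<Sum>j'<nb. if j' = j then T i j k else 0) else 0)"
    by (intro sum.cong refl) auto
  also have "\<dots> = T i j k" using i j by simp
  finally show "T i j k = (\<Sum>l<na*nb. ?u l i * ?v l j * ?w l k)" by simp
qed

lemma br_holds: "border_rank_le na nb nc (border_rank na nb nc T) T"
proof -
  have "border_rank_le na nb nc (na*nb) T"
    unfolding border_rank_le_def using rank_le_exists by (intro exI[of _ "\<lambda>m. T"]) auto
  then show ?thesis unfolding border_rank_def by (rule LeastI)
qed

lemma compact_subseq:
  fixes x :: "nat \<Rightarrow> nat \<Rightarrow> complex"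
  assumes "\<And>m i. norm (x m i) \<le> 1"
  shows "\<exists>\<sigma> L. strict_mono \<sigma> \<and> (\<forall>i<n. (\<lambda>m. x (\<sigma> m) i) \<longlonglongrightarrow> L i)"
proof (induction n)
  case 0 show ?case by (intro exI[of _ id] exI) (auto simp: strict_mono_def)
next
  case (Suc n)
  then obtain \<sigma> L where s: "strict_mono \<sigma>" and L: "\<forall>i<n. (\<lambda>m. x (\<sigma> m) i) \<longlonglongrightarrow> L i" by blast
  have "bounded (range (\<lambda>m. x (\<sigma> m) n))"
    using assms by (auto simp: bounded_iff)
  then obtain l \<tau> where t: "strict_mono \<tau>" and l: "((\<lambda>m. x (\<sigma> m) n) \<circ> \<tau>) \<longlonglongrightarrow> l"
    using bounded_imp_convergent_subsequence by blast
  have "\<forall>i<Suc n. (\<lambda>m. x ((\<sigma> \<circ> \<tau>) m) i) \<longlonglongrightarrow> (L(n := l)) i"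
  proof (intro allI impI)
    fix i assume "i < Suc n"
    then consider "i < n" | "i = n" by linarith
    then show "(\<lambda>m. x ((\<sigma> \<circ> \<tau>) m) i) \<longlonglongrightarrow> (L(n := l)) i"
    proof cases
      case 1
      then have "((\<lambda>m. x (\<sigma> m) i) \<circ> \<tau>) \<longlonglongrightarrow> L i"
        using L t LIMSEQ_subseq_LIMSEQ by blast
      then show ?thesis using 1 by (simp add: o_def)
    next
      case 2 then show ?thesis using l by (simp add: o_def)
    qed
  qed
  moreover have "strict_mono (\<sigma> \<circ> \<tau>)" using s t strict_mono_o by blast
  ultimately show ?case by blast
qed

definition skip :: "nat \<Rightarrow> nat \<Rightarrow> nat" where
  "skip i0 p = (if p < i0 then p else Suc p)"

lemma skip_props: "skip i0 p \<noteq> i0" "i0 < na \<Longrightarrow> p < na - 1 \<Longrightarrow> skip i0 p < na"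
  "skip i0 p = skip i0 q \<longleftrightarrow> p = q"
  by (auto simp: skip_def)

lemma annihilate:
  fixes a :: "nat \<Rightarrow> complex"
  assumes "i0 < na" "s < na" "s \<noteq> i0" "\<forall>i<na. norm (a i) \<le> norm (a i0)"
  shows "(\<Sum>i<na. ((if i = s then 1 else 0) - (if i = i0 then a s / a i0 else 0)) * a i) = 0"
proof -
  have "(\<Sum>i<na. ((if i = s then 1 else 0) - (if i = i0 then a s / a i0 else 0)) * a i)
     = (\<Sum>i<na. (if i = s then a i else 0)) - (\<Sum>i<na. (if i = i0 then a s / a i0 * a i else 0))"
    unfolding sum_subtractf[symmetric] by (intro sum.cong refl) (auto simp: left_diff_distrib)
  also have "\<dots> = a s - a s / a i0 * a i0" using assms by simp
  also have "\<dots> = 0"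
  proof (cases "a i0 = 0")
    case True then have "a s = 0" using assms by fastforce
    then show ?thesis by simp
  qed simp
  finally show ?thesis .
qed

lemma indep:
  assumes "i0 < na"
  shows "lin_indep_family na (na - 1) (\<lambda>p i. (if i = skip i0 p then 1 else 0) - (if i = i0 then c p else 0))"
  unfolding lin_indep_family_def
proof (intro allI impI)
  fix cc :: "nat \<Rightarrow> complex" and q
  assume H: "\<forall>i<na. (\<Sum>p<na - 1. cc p * ((if i = skip i0 p then 1 else 0) - (if i = i0 then c p else 0))) = 0"
    and q: "q < na - 1"
  have "skip i0 q < na" using skip_props(2)[OF assms q] .
  from H[rule_format, OF this]
  have "(\<Sum>p<na - 1. cc p * ((if skip i0 q = skip i0 p then 1 else 0) - (if skip i0 q = i0 then c p else 0))) = 0" .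
  then have "(\<Sum>p<na - 1. cc p * (if p = q then 1 else 0)) = 0"
    by (simp add: skip_props(1,3) eq_commute[of q])
  then have "(\<Sum>p<na - 1. if p = q then cc p else 0) = 0"
    by (simp add: if_distrib cong: if_cong)
  then show "cc q = 0" using q by (simp add: sum.delta)
qed

lemma rank_restrict:
  assumes T: "tensor_eq na nb nc S (\<lambda>i j k. \<Sum>l<r. u l i * v l j * w l k)"
    and r: "r \<ge> 1" and ann: "\<forall>p<n. (\<Sum>i<na. h p i * u (r-1) i) = 0"
  shows "rank_le n nb nc (r-1) (restrict_A na h S)"
  unfolding rank_le_def tensor_eq_def
proof (intro exI allI impI)
  fix p j k assume p: "p < n" and j: "j < nb" and k: "k < nc"
  have "restrict_A na h S p j k = (\<Sum>i<na. h p i * (\<Sum>l<r. u l i * v l j * w l k))"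
    unfolding restrict_A_def using T j k by (intro sum.cong refl) (auto simp: tensor_eq_def)
  also have "\<dots> = (\<Sum>l<r. (\<Sum>i<na. h p i * u l i) * v l j * w l k)"
    by (simp add: sum_distrib_left sum_distrib_right sum.swap[of _ "{..<na}"] mult_ac)
  also have "\<dots> = (\<Sum>l<Suc (r-1). (\<Sum>i<na. h p i * u l i) * v l j * w l k)"
    using r by simp
  also have "\<dots> = (\<Sum>l<r-1. (\<Sum>i<na. h p i * u l i) * v l j * w l k)"
    using ann p by simp
  finally show "restrict_A na h S p j k = (\<Sum>l<r-1. (\<lambda>l p. \<Sum>i<na. h p i * u l i) l p * v l j * w l k)"
    by simp
qed

lemma ex_max:
  fixes f :: "nat \<Rightarrow> real"
  assumes "0 < n" shows "\<exists>p<n. \<forall>i<n. f i \<le> f p"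
proof -
  have "Max (f ` {..<n}) \<in> f ` {..<n}" using assms by (intro Max_in) auto
  then obtain p where p: "p < n" "f p = Max (f ` {..<n})" by auto
  then show ?thesis by (intro exI[of _ p]) auto
qed

theorem lemma5p2:
  fixes na nb nc :: nat and T :: tensor
  assumes "\<exists>i<na. \<exists>j<nb. \<exists>k<nc. T i j k \<noteq> 0"
  shows "\<exists>h :: nat \<Rightarrow> nat \<Rightarrow> complex.
           lin_indep_family na (na - 1) h \<and>
           border_rank (na - 1) nb nc (restrict_A na h T) + 1 \<le> border_rank na nb nc T"
proof -
  obtain i1 j1 k1 where ijk: "i1 < na" "j1 < nb" "k1 < nc" "T i1 j1 k1 \<noteq> 0" using assms by blast
  define r where "r = border_rank na nb nc T"
  obtain S where Sr: "\<forall>m. rank_le na nb nc r (S m)"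
    and Slim: "\<forall>i<na. \<forall>j<nb. \<forall>k<nc. (\<lambda>m. S m i j k) \<longlonglongrightarrow> T i j k"
    using br_holds[of na nb nc T] unfolding r_def border_rank_le_def by blast
  have r1: "r \<ge> 1"
  proof (rule ccontr)
    assume "\<not> r \<ge> 1" then have "r = 0" by simp
    then have "\<forall>m. S m i1 j1 k1 = 0" using Sr ijk by (auto simp: rank_le_def tensor_eq_def)
    then have "(\<lambda>m. S m i1 j1 k1) \<longlonglongrightarrow> 0" by simp
    moreover have "(\<lambda>m. S m i1 j1 k1) \<longlonglongrightarrow> T i1 j1 k1" using Slim ijk by blast
    ultimately have "T i1 j1 k1 = 0" using LIMSEQ_unique by blast
    then show False using ijk(4) by simp
  qed
  have "\<forall>m. \<exists>u v w. tensor_eq na nb nc (S m) (\<lambda>i j k. \<Sum>l<r. u l i * v l j * w l k)"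
    using Sr unfolding rank_le_def by blast
  then obtain u where "\<forall>m. \<exists>v w. tensor_eq na nb nc (S m) (\<lambda>i j k. \<Sum>l<r. u m l i * v l j * w l k)"
    by (rule choice[THEN exE]) blast
  then obtain v where "\<forall>m. \<exists>w. tensor_eq na nb nc (S m) (\<lambda>i j k. \<Sum>l<r. u m l i * v m l j * w l k)"
    by (rule choice[THEN exE]) blast
  then obtain w where uvw: "\<forall>m. tensor_eq na nb nc (S m) (\<lambda>i j k. \<Sum>l<r. u m l i * v m l j * w m l k)"
    by (rule choice[THEN exE]) blast
  define a where "a m i = u m (r-1) i" for m i
  have na0: "0 < na" using ijk by simp
  have "\<forall>m. \<exists>p. p < na \<and> (\<forall>i<na. norm (a m i) \<le> norm (a m p))"
  proof
    fix m show "\<exists>p. p < na \<and> (\<forall>i<na. norm (a m i) \<le> norm (a m p))"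
      using ex_max[OF na0, of "\<lambda>i. norm (a m i)"] by simp
  qed
  from choice[OF this] obtain piv where piv: "\<forall>m. piv m < na \<and> (\<forall>i<na. norm (a m i) \<le> norm (a m (piv m)))"
    by blast
  have "finite (piv ` UNIV)" by (rule finite_subset[of _ "{..<na}"]) (use piv in auto)
  then obtain m0 where "infinite {m. piv m = piv m0}"
    using pigeonhole_infinite[of UNIV piv] by auto
  define i0 where "i0 = piv m0"
  have i0: "i0 < na" using piv i0_def by blast
  obtain \<rho> :: "nat \<Rightarrow> nat" where \<rho>: "strict_mono \<rho>" "\<forall>m. \<rho> m \<in> {m. piv m = i0}"
    using infinite_enumerate \<open>infinite {m. piv m = piv m0}\<close> i0_def by blast
  have pivr: "piv (\<rho> m) = i0" for m using \<rho> by auto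
  define x where "x m i = (if i < na then a (\<rho> m) i / a (\<rho> m) i0 else 0)" for m i
  have "norm (x m i) \<le> 1" for m i
  proof (cases "i < na \<and> a (\<rho> m) i0 \<noteq> 0")
    case True
    then have "norm (a (\<rho> m) i) \<le> norm (a (\<rho> m) i0)" using piv pivr[of m] by auto
    then show ?thesis using True by (simp add: x_def norm_divide divide_le_eq_1)
  qed (auto simp: x_def)
  then obtain \<sigma> L where \<sigma>: "strict_mono \<sigma>" and L: "\<forall>i<na. (\<lambda>m. x (\<sigma> m) i) \<longlonglongrightarrow> L i"
    using compact_subseq by blast
  define \<tau> where "\<tau> = \<rho> \<circ> \<sigma>"
  have \<tau>: "strict_mono \<tau>" unfolding \<tau>_def using \<sigma> \<rho>(1) strict_mono_o by blast
  define hm where "hm m p i = (if i = skip i0 p then 1 else 0) - (if i = i0 then x (\<sigma> m) (skip i0 p) else 0)" for m p i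
  define h where "h p i = (if i = skip i0 p then 1 else 0) - (if i = i0 then L (skip i0 p) else (0::complex))" for p i
  have hind: "lin_indep_family na (na - 1) h"
    unfolding h_def by (rule indep[OF i0])
  have rk: "rank_le (na-1) nb nc (r-1) (restrict_A na (hm m) (S (\<tau> m)))" for m
  proof (rule rank_restrict[OF uvw[rule_format] r1])
    show "\<forall>p<na - 1. (\<Sum>i<na. hm m p i * u (\<tau> m) (r - 1) i) = 0"
    proof (intro allI impI)
      fix p assume p: "p < na - 1"
      have s: "skip i0 p < na" "skip i0 p \<noteq> i0" using skip_props i0 p by auto
      have "(\<Sum>i<na. hm m p i * u (\<tau> m) (r - 1) i)
        = (\<Sum>i<na. ((if i = skip i0 p then 1 else 0) - (if i = i0 then a (\<tau> m) (skip i0 p) / a (\<tau> m) i0 else 0)) * a (\<tau> m) i)"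
        using s by (intro sum.cong refl) (auto simp: hm_def x_def a_def \<tau>_def)
      also have "\<dots> = 0"
        by (rule annihilate[OF i0 s]) (use piv pivr[of "\<sigma> m"] in \<open>force simp: \<tau>_def\<close>)
      finally show "(\<Sum>i<na. hm m p i * u (\<tau> m) (r - 1) i) = 0" .
    qed
  qed
  have lim: "(\<lambda>m. restrict_A na (hm m) (S (\<tau> m)) p j k) \<longlonglongrightarrow> restrict_A na h T p j k"
    if p: "p < na - 1" and j: "j < nb" and k: "k < nc" for p j k
    unfolding restrict_A_def
  proof (intro tendsto_sum tendsto_mult)
    fix i assume i: "i \<in> {..<na}"
    have "((\<lambda>m. S m i j k) \<circ> \<tau>) \<longlonglongrightarrow> T i j k"
      using Slim i j k \<tau> LIMSEQ_subseq_LIMSEQ by blast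
    then show "(\<lambda>m. S (\<tau> m) i j k) \<longlonglongrightarrow> T i j k" by (simp add: o_def)
    have s: "skip i0 p < na" using skip_props i0 p by auto
    show "(\<lambda>m. hm m p i) \<longlonglongrightarrow> h p i"
      unfolding hm_def h_def
      by (intro tendsto_diff tendsto_const) (use L s in auto)
  qed
  have "border_rank_le (na-1) nb nc (r-1) (restrict_A na h T)"
    unfolding border_rank_le_def using rk lim by (intro exI[of _ "\<lambda>m. restrict_A na (hm m) (S (\<tau> m))"]) auto
  then have "border_rank (na - 1) nb nc (restrict_A na h T) \<le> r - 1"
    unfolding border_rank_def by (rule Least_le)
  then show ?thesis using hind r1 unfolding r_def by (intro exI[of _ h]) auto
qed

end
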